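(* Let $G$ be a finite weakly minmax group and let $N$ be a normal subgroup of $G$ which is an intersection of maximal subgroups of $G$. Then $G/N$ is weakly minmax.
   Context: A subgroup of $G$ is a maximal intersection if it is an intersection of finitely many (at least one) maximal subgroups of $G$; $\mathcal M(G)$ is the poset under inclusion consisting of $G$ and all maximal intersections in $G$. An unrefinable chain in $\mathcal M(G)$ is a chain $K_t<\dots<K_0$ of elements of $\mathcal M(G)$ to which no further element of $\mathcal M(G)$ can be added; its length is $t$. $\mathrm{MinInt}(G)$ and $\mathrm{MaxInt}(G)$ are the minimal and maximal lengths of unrefinable chains in $\mathcal M(G)$. $\alpha(G)$ is the smallest cardinality of a family of maximal subgroups of $G$ whose intersection equals the Frattini subgroup $\Phi(G)$. $G$ is weakly minmax if $\mathrm{MinInt}(G)=\mathrm{MaxInt}(G)=\alpha(G)$. *)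

theory Defs
  imports "HOL-Algebra.Algebra"
begin

definition maximal_subgroup :: "('a, 'b) monoid_scheme \<Rightarrow> 'a set \<Rightarrow> bool" where
  "maximal_subgroup G H \<longleftrightarrow> subgroup H G \<and> H \<noteq> carrier G \<and>
     (\<forall>K. subgroup K G \<and> H \<subseteq> K \<longrightarrow> K = H \<or> K = carrier G)"

definition max_intersection :: "('a, 'b) monoid_scheme \<Rightarrow> 'a set \<Rightarrow> bool" where
  "max_intersection G H \<longleftrightarrow> (\<exists>F. finite F \<and> F \<noteq> {} \<and>
     (\<forall>M\<in>F. maximal_subgroup G M) \<and> H = \<Inter>F)"

definition MIposet :: "('a, 'b) monoid_scheme \<Rightarrow> 'a set set" where
  "MIposet G = insert (carrier G) {H. max_intersection G H}"

definition frattini :: "('a, 'b) monoid_scheme \<Rightarrow> 'a set" where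
  "frattini G = carrier G \<inter> \<Inter>{H. maximal_subgroup G H}"

definition unrefinable_chain :: "('a, 'b) monoid_scheme \<Rightarrow> (nat \<Rightarrow> 'a set) \<Rightarrow> nat \<Rightarrow> bool" where
  "unrefinable_chain G K t \<longleftrightarrow>
     (\<forall>i\<le>t. K i \<in> MIposet G) \<and> (\<forall>i<t. K (Suc i) \<subset> K i) \<and>
     \<not> (\<exists>Y\<in>MIposet G. Y \<notin> K ` {0..t} \<and> (\<forall>i\<le>t. Y \<subseteq> K i \<or> K i \<subseteq> Y))"

definition MinInt :: "('a, 'b) monoid_scheme \<Rightarrow> nat" where
  "MinInt G = (LEAST t. \<exists>K. unrefinable_chain G K t)"

definition MaxInt :: "('a, 'b) monoid_scheme \<Rightarrow> nat" where
  "MaxInt G = Max {t. \<exists>K. unrefinable_chain G K t}"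

definition alpha :: "('a, 'b) monoid_scheme \<Rightarrow> nat" where
  "alpha G = (LEAST n. \<exists>F. finite F \<and> card F = n \<and> (\<forall>M\<in>F. maximal_subgroup G M) \<and>
                          carrier G \<inter> \<Inter>F = frattini G)"

definition weakly_minmax :: "('a, 'b) monoid_scheme \<Rightarrow> bool" where
  "weakly_minmax G \<longleftrightarrow> MinInt G = MaxInt G \<and> MaxInt G = alpha G"

end

theory Submission
  imports Defs
begin
definition ischain :: "'a set set \<Rightarrow> 'a set set \<Rightarrow> bool" where
  "ischain P C \<longleftrightarrow> C \<subseteq> P \<and> (\<forall>U\<in>C. \<forall>Y\<in>C. U \<subseteq> Y \<or> Y \<subseteq> U)"

definition maxchain :: "'a set set \<Rightarrow> 'a set set \<Rightarrow> bool" where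
  "maxchain P C \<longleftrightarrow> ischain P C \<and> (\<forall>Y\<in>P. (\<forall>U\<in>C. Y \<subseteq> U \<or> U \<subseteq> Y) \<longrightarrow> Y \<in> C)"

definition ucP :: "'a set set \<Rightarrow> (nat \<Rightarrow> 'a set) \<Rightarrow> nat \<Rightarrow> bool" where
  "ucP P K t \<longleftrightarrow>
     (\<forall>i\<le>t. K i \<in> P) \<and> (\<forall>i<t. K (Suc i) \<subset> K i) \<and>
     \<not> (\<exists>Y\<in>P. Y \<notin> K ` {0..t} \<and> (\<forall>i\<le>t. Y \<subseteq> K i \<or> K i \<subseteq> Y))"

lemma uc_eq: "unrefinable_chain G K t = ucP (MIposet G) K t"
  unfolding unrefinable_chain_def ucP_def ..

lemma dec_strict:
  assumes "\<forall>i<t. K (Suc i) \<subset> K i"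
  shows "i < j \<Longrightarrow> j \<le> t \<Longrightarrow> K j \<subset> K i"
proof (induction j)
  case 0 then show ?case by simp
next
  case (Suc j)
  have s: "K (Suc j) \<subset> K j" using assms Suc.prems(2) by simp
  show ?case
  proof (cases "i = j")
    case True then show ?thesis using s by simp
  next
    case False
    then have "K j \<subset> K i" using Suc by simp
    then show ?thesis using s by (rule psubset_trans[rotated])
  qed
qed

lemma dec_mono:
  assumes "\<forall>i<t. K (Suc i) \<subset> K i" "i \<le> j" "j \<le> t"
  shows "K j \<subseteq> K i"
proof (cases "i = j")
  case True then show ?thesis by simp
next
  case False
  then have "i < j" using assms(2) by simp
  then show ?thesis using dec_strict[OF assms(1)] assms(3) by blast
qed

lemma chain_Union_mem:
  assumes "finite C" "C \<noteq> {}" "\<forall>U\<in>C. \<forall>Y\<in>C. U \<subseteq> Y \<or> Y \<subseteq> U"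
  shows "\<Union>C \<in> C"
  using assms
proof (induction C rule: finite_ne_induct)
  case (singleton x) then show ?case by simp
next
  case (insert x F)
  then have m: "\<Union>F \<in> F" by blast
  then have "x \<subseteq> \<Union>F \<or> \<Union>F \<subseteq> x" using insert.prems by blast
  then show ?case
  proof
    assume "x \<subseteq> \<Union>F"
    then have "\<Union>(insert x F) = \<Union>F" by auto
    then show ?thesis using m by simp
  next
    assume "\<Union>F \<subseteq> x"
    then have "\<Union>(insert x F) = x" by auto
    then show ?thesis by simp
  qed
qed

lemma chain_Inter_mem:
  assumes "finite C" "C \<noteq> {}" "\<forall>U\<in>C. \<forall>Y\<in>C. U \<subseteq> Y \<or> Y \<subseteq> U"
  shows "\<Inter>C \<in> C"
  using assms
proof (induction C rule: finite_ne_induct)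
  case (singleton x) then show ?case by simp
next
  case (insert x F)
  then have m: "\<Inter>F \<in> F" by blast
  then have "x \<subseteq> \<Inter>F \<or> \<Inter>F \<subseteq> x" using insert.prems by blast
  then show ?case
  proof
    assume "\<Inter>F \<subseteq> x"
    then have "\<Inter>(insert x F) = \<Inter>F" by auto
    then show ?thesis using m by simp
  next
    assume "x \<subseteq> \<Inter>F"
    then have "\<Inter>(insert x F) = x" by auto
    then show ?thesis by simp
  qed
qed

lemma enum_chain:
  "finite C \<Longrightarrow> card C = Suc t \<Longrightarrow> (\<forall>U\<in>C. \<forall>Y\<in>C. U \<subseteq> Y \<or> Y \<subseteq> U) \<Longrightarrow>
   \<exists>K. K ` {0..t} = C \<and> (\<forall>i<t. K (Suc i) \<subset> K i)"
proof (induction t arbitrary: C)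
  case 0
  then obtain x where "C = {x}" by (metis One_nat_def card_1_singletonE)
  then show ?case by (auto intro!: exI[of _ "\<lambda>_. x"])
next
  case (Suc t)
  have ne: "C \<noteq> {}" using Suc.prems by auto
  define T where "T = \<Union>C"
  have T: "T \<in> C" unfolding T_def using chain_Union_mem[OF Suc.prems(1) ne Suc.prems(3)] .
  define C' where "C' = C - {T}"
  have c': "card C' = Suc t" using Suc.prems T unfolding C'_def by simp
  obtain K' where K': "K' ` {0..t} = C'" "\<forall>i<t. K' (Suc i) \<subset> K' i"
    using Suc.IH[of C'] c' Suc.prems unfolding C'_def by auto
  define K where "K = (\<lambda>i. case i of 0 \<Rightarrow> T | Suc j \<Rightarrow> K' j)"
  have img: "K ` {0..Suc t} = C"
  proof -
    have e1: "K ` {0..Suc t} = insert (K 0) ((K \<circ> Suc) ` {0..t})"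
      by (simp only: atLeast0_atMost_Suc_eq_insert_0 image_insert image_comp)
    have e2: "K \<circ> Suc = K'" by (simp add: K_def fun_eq_iff)
    have "K ` {0..Suc t} = insert T (K' ` {0..t})" unfolding e1 e2 by (simp add: K_def)
    then show ?thesis using K'(1) T unfolding C'_def by auto
  qed
  have dec: "\<forall>i<Suc t. K (Suc i) \<subset> K i"
  proof (intro allI impI)
    fix i assume i: "i < Suc t"
    show "K (Suc i) \<subset> K i"
    proof (cases i)
      case 0
      have "K' 0 \<in> C'" using K'(1) by auto
      then have "K' 0 \<subseteq> T" "K' 0 \<noteq> T" unfolding C'_def T_def by auto
      then show ?thesis using 0 unfolding K_def by auto
    next
      case (Suc j)
      then show ?thesis using K'(2) i unfolding K_def by auto
    qed
  qed
  show ?case using img dec by blast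
qed

lemma lens_sub1:
  assumes "ucP P K t"
  shows "\<exists>C. maxchain P C \<and> card C = Suc t"
proof -
  define C where "C = K ` {0..t}"
  have dec: "\<forall>i<t. K (Suc i) \<subset> K i" using assms unfolding ucP_def by blast
  have inj: "inj_on K {0..t}"
  proof (rule inj_onI)
    fix i j assume ij: "i \<in> {0..t}" "j \<in> {0..t}" "K i = K j"
    show "i = j"
    proof (rule ccontr)
      assume "i \<noteq> j"
      then consider "i < j" | "j < i" by linarith
      then show False
      proof cases
        case 1
        have "K j \<subset> K i" using dec_strict[OF dec 1] ij(2) by simp
        then show False using ij(3) by simp
      next
        case 2
        have "K i \<subset> K j" using dec_strict[OF dec 2] ij(1) by simp
        then show False using ij(3) by simp
      qed
    qed
  qed
  have "card C = Suc t" unfolding C_def using card_image[OF inj] by simp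
  moreover have "maxchain P C"
    unfolding maxchain_def ischain_def
  proof (intro conjI ballI impI)
    show "C \<subseteq> P" using assms unfolding ucP_def C_def by auto
  next
    fix U Y assume "U \<in> C" "Y \<in> C"
    then obtain i j where "i \<le> t" "j \<le> t" "U = K i" "Y = K j" unfolding C_def by auto
    then show "U \<subseteq> Y \<or> Y \<subseteq> U"
      using dec_mono[OF dec, of i j] dec_mono[OF dec, of j i] by (metis nle_le)
  next
    fix Y assume Y: "Y \<in> P" "\<forall>U\<in>C. Y \<subseteq> U \<or> U \<subseteq> Y"
    have ng: "\<not> (\<exists>Y\<in>P. Y \<notin> K ` {0..t} \<and> (\<forall>i\<le>t. Y \<subseteq> K i \<or> K i \<subseteq> Y))"
      using assms unfolding ucP_def by blast
    have h: "\<forall>i\<le>t. Y \<subseteq> K i \<or> K i \<subseteq> Y" using Y(2) unfolding C_def by auto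
    show "Y \<in> C" unfolding C_def
    proof (rule ccontr)
      assume a: "Y \<notin> K ` {0..t}"
      have "\<exists>Y\<in>P. Y \<notin> K ` {0..t} \<and> (\<forall>i\<le>t. Y \<subseteq> K i \<or> K i \<subseteq> Y)"
        using Y(1) a h by blast
      then show False using ng by contradiction
    qed
  qed
  ultimately show ?thesis by blast
qed

lemma lens_sub2:
  assumes "finite P" "maxchain P C" "card C = Suc t"
  shows "\<exists>K. ucP P K t"
proof -
  have fin: "finite C" using assms unfolding maxchain_def ischain_def by (meson finite_subset)
  have ch: "\<forall>U\<in>C. \<forall>Y\<in>C. U \<subseteq> Y \<or> Y \<subseteq> U"
    using assms(2) unfolding maxchain_def ischain_def by blast
  obtain K where K: "K ` {0..t} = C" "\<forall>i<t. K (Suc i) \<subset> K i"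
    using enum_chain[OF fin assms(3) ch] by blast
  have CP: "C \<subseteq> P" and mx: "\<forall>Y\<in>P. (\<forall>U\<in>C. Y \<subseteq> U \<or> U \<subseteq> Y) \<longrightarrow> Y \<in> C"
    using assms(2) unfolding maxchain_def ischain_def by auto
  have "ucP P K t" unfolding ucP_def
  proof (intro conjI allI impI notI)
    fix i assume "i \<le> t" then show "K i \<in> P" using CP K(1) by auto
  next
    fix i assume "i < t" then show "K (Suc i) \<subset> K i" using K(2) by simp
  next
    assume "\<exists>Y\<in>P. Y \<notin> K ` {0..t} \<and> (\<forall>i\<le>t. Y \<subseteq> K i \<or> K i \<subseteq> Y)"
    then obtain Y where Y0: "Y \<in> P" "Y \<notin> K ` {0..t}" "\<forall>i\<le>t. Y \<subseteq> K i \<or> K i \<subseteq> Y" by blast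
    have Y: "Y \<in> P" "Y \<notin> C" "\<forall>i\<le>t. Y \<subseteq> K i \<or> K i \<subseteq> Y" using Y0 K(1) by simp_all
    have "\<forall>U\<in>C. Y \<subseteq> U \<or> U \<subseteq> Y"
    proof
      fix U assume "U \<in> C"
      then have "U \<in> K ` {0..t}" using K(1) by simp
      then obtain i where "i \<in> {0..t}" "U = K i" by blast
      then show "Y \<subseteq> U \<or> U \<subseteq> Y" using Y(3) by simp
    qed
    then show False using mx Y(1,2) by blast
  qed
  then show ?thesis by blast
qed

lemma lens_eq:
  assumes "finite P"
  shows "{t. \<exists>K. ucP P K t} = {t. \<exists>C. maxchain P C \<and> card C = Suc t}"
  using lens_sub1 lens_sub2[OF assms] by blast

definition PP :: "'a set \<Rightarrow> 'a set set \<Rightarrow> 'a set set" where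
  "PP A Ms = insert A {U. \<exists>F. finite F \<and> F \<noteq> {} \<and> F \<subseteq> Ms \<and> U = \<Inter>F}"

lemma PP_sub: "Ms \<subseteq> Pow A \<Longrightarrow> PP A Ms \<subseteq> Pow A"
  unfolding PP_def by auto

lemma PP_finite: "finite A \<Longrightarrow> Ms \<subseteq> Pow A \<Longrightarrow> finite (PP A Ms)"
  using PP_sub by (meson finite_Pow_iff finite_subset)

lemma ex_maxchain:
  assumes "finite P"
  shows "\<exists>C. maxchain P C"
proof -
  define S where "S = {C. ischain P C}"
  have "S \<subseteq> Pow P" unfolding S_def ischain_def by auto
  then have finS: "finite S" using assms by (meson finite_Pow_iff finite_subset)
  have "{} \<in> S" unfolding S_def ischain_def by simp
  then have neS: "card ` S \<noteq> {}" by auto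
  define k where "k = Max (card ` S)"
  have "k \<in> card ` S" unfolding k_def using finS neS by (intro Max_in) auto
  then obtain C where C: "C \<in> S" "card C = k" by auto
  have le: "\<And>C'. C' \<in> S \<Longrightarrow> card C' \<le> k" unfolding k_def using finS by simp
  have "C \<subseteq> P" using C(1) unfolding S_def ischain_def by simp
  then have finC: "finite C" using assms by (rule finite_subset)
  have "maxchain P C" unfolding maxchain_def
  proof (intro conjI ballI impI)
    show "ischain P C" using C(1) unfolding S_def by simp
  next
    fix Y assume Y: "Y \<in> P" "\<forall>U\<in>C. Y \<subseteq> U \<or> U \<subseteq> Y"
    show "Y \<in> C"
    proof (rule ccontr)
      assume nY: "Y \<notin> C"
      have "insert Y C \<in> S" using C(1) Y unfolding S_def ischain_def by auto
      then have "card (insert Y C) \<le> k" by (rule le)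
      moreover have "card (insert Y C) = Suc k" using nY finC C(2) by simp
      ultimately show False by simp
    qed
  qed
  then show ?thesis by blast
qed

lemma maxchain_ne: "maxchain P C \<Longrightarrow> U \<in> P \<Longrightarrow> C \<noteq> {}"
  unfolding maxchain_def by auto

lemma CF:
  assumes Ms: "Ms \<subseteq> Pow A"
  shows "finite C \<Longrightarrow> C \<subseteq> PP A Ms \<Longrightarrow> (\<forall>U\<in>C. \<forall>Y\<in>C. U \<subseteq> Y \<or> Y \<subseteq> U) \<Longrightarrow>
    bt \<in> C \<Longrightarrow> tp \<in> C \<Longrightarrow> (\<forall>U\<in>C. bt \<subseteq> U \<and> U \<subseteq> tp) \<Longrightarrow>
    (\<forall>Y\<in>PP A Ms. bt \<subseteq> Y \<and> Y \<subseteq> tp \<and> (\<forall>U\<in>C. Y \<subseteq> U \<or> U \<subseteq> Y) \<longrightarrow> Y \<in> C) \<Longrightarrow>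
    \<exists>F. F \<subseteq> Ms \<and> finite F \<and> card F + 1 \<le> card C \<and> tp \<inter> \<Inter>F = bt"
proof (induction "card C" arbitrary: C bt rule: less_induct)
  case less
  note fin = less.prems(1) and CP = less.prems(2) and ch = less.prems(3)
    and bC = less.prems(4) and tC = less.prems(5) and bt = less.prems(6) and sat = less.prems(7)
  show ?case
  proof (cases "bt = tp")
    case True
    have "card C \<ge> 1" using fin bC by (metis One_nat_def Suc_leI card_gt_0_iff empty_iff)
    then show ?thesis using True by (intro exI[of _ "{}"]) auto
  next
    case False
    define C' where "C' = C - {bt}"
    have tC': "tp \<in> C'" using tC False unfolding C'_def by simp
    have finC': "finite C'" using fin unfolding C'_def by simp
    have chC': "\<forall>U\<in>C'. \<forall>Y\<in>C'. U \<subseteq> Y \<or> Y \<subseteq> U" using ch unfolding C'_def by auto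
    define bt' where "bt' = \<Inter>C'"
    have b'C': "bt' \<in> C'" unfolding bt'_def using chain_Inter_mem[OF finC' _ chC'] tC' by auto
    have bb': "bt \<subseteq> bt'" "bt \<noteq> bt'" using b'C' bt unfolding C'_def by auto
    have b't: "\<forall>U\<in>C'. bt' \<subseteq> U \<and> U \<subseteq> tp" using bt unfolding bt'_def C'_def by auto
    have sat': "\<forall>Y\<in>PP A Ms. bt' \<subseteq> Y \<and> Y \<subseteq> tp \<and> (\<forall>U\<in>C'. Y \<subseteq> U \<or> U \<subseteq> Y) \<longrightarrow> Y \<in> C'"
    proof (intro ballI impI)
      fix Y assume Y: "Y \<in> PP A Ms" "bt' \<subseteq> Y \<and> Y \<subseteq> tp \<and> (\<forall>U\<in>C'. Y \<subseteq> U \<or> U \<subseteq> Y)"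
      have Yb: "bt \<subseteq> Y" using Y(2) bb'(1) by (meson order_trans)
      have "\<forall>U\<in>C. Y \<subseteq> U \<or> U \<subseteq> Y"
      proof
        fix U assume "U \<in> C"
        show "Y \<subseteq> U \<or> U \<subseteq> Y"
        proof (cases "U = bt")
          case True then show ?thesis using Yb by simp
        next
          case False then have "U \<in> C'" unfolding C'_def using \<open>U \<in> C\<close> by simp
          then show ?thesis using Y(2) by blast
        qed
      qed
      then have "Y \<in> C" using sat Y(1) Yb Y(2) by blast
      moreover have "Y \<noteq> bt" using Y(2) bb' by auto
      ultimately show "Y \<in> C'" unfolding C'_def by simp
    qed
    have lt: "card C' < card C" unfolding C'_def by (rule card_Diff1_less[OF fin bC])
    have CP': "C' \<subseteq> PP A Ms" using CP unfolding C'_def by auto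
    obtain F' where F': "F' \<subseteq> Ms" "finite F'" "card F' + 1 \<le> card C'" "tp \<inter> \<Inter>F' = bt'"
      using less.hyps[OF lt finC' CP' chC' b'C' tC' b't sat'] by blast
    have topA: "tp \<subseteq> A" using tC CP PP_sub[OF Ms] by auto
    have "bt \<in> PP A Ms" using bC CP by auto
    moreover have "bt \<noteq> A" using bt tC topA False by auto
    ultimately obtain Fb where Fb: "finite Fb" "Fb \<noteq> {}" "Fb \<subseteq> Ms" "bt = \<Inter>Fb"
      unfolding PP_def by auto
    obtain M where M: "M \<in> Fb" "\<not> bt' \<subseteq> M"
      using bb' Fb(4) by blast
    define Y where "Y = bt' \<inter> M"
    have MA: "M \<subseteq> A" using M(1) Fb(3) Ms by auto
    have "bt' \<in> PP A Ms" using b'C' CP unfolding C'_def by auto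
    then have YP: "Y \<in> PP A Ms"
    proof (cases "bt' = A")
      case True
      then have "Y = \<Inter>{M}" unfolding Y_def using MA by auto
      then show ?thesis unfolding PP_def using M(1) Fb(3) by blast
    next
      case False
      then obtain F'' where "finite F''" "F'' \<noteq> {}" "F'' \<subseteq> Ms" "bt' = \<Inter>F''"
        using \<open>bt' \<in> PP A Ms\<close> unfolding PP_def by auto
      then have "Y = \<Inter>(insert M F'')" "finite (insert M F'')" "insert M F'' \<subseteq> Ms"
        unfolding Y_def using M(1) Fb(3) by auto
      then show ?thesis unfolding PP_def by blast
    qed
    have botY: "bt \<subseteq> Y" unfolding Y_def using bb' Fb(4) M(1) by auto
    have Yt: "Y \<subseteq> tp" unfolding Y_def using b'C' b't by auto
    have cmp: "\<forall>U\<in>C. Y \<subseteq> U \<or> U \<subseteq> Y"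
    proof
      fix U assume "U \<in> C"
      show "Y \<subseteq> U \<or> U \<subseteq> Y"
      proof (cases "U = bt")
        case True then show ?thesis using botY by simp
      next
        case False
        then have "U \<in> C'" unfolding C'_def using \<open>U \<in> C\<close> by simp
        then have "bt' \<subseteq> U" using b't by simp
        then show ?thesis unfolding Y_def by auto
      qed
    qed
    have "Y \<in> C" using sat YP botY Yt cmp by blast
    have Yb: "Y = bt"
    proof (rule ccontr)
      assume "Y \<noteq> bt"
      then have "Y \<in> C'" unfolding C'_def using \<open>Y \<in> C\<close> by simp
      then have "bt' \<subseteq> Y" using b't by simp
      then show False using M(2) unfolding Y_def by auto
    qed
    have "tp \<inter> \<Inter>(insert M F') = bt" using F'(4) Yb unfolding Y_def by auto
    moreover have "card (insert M F') + 1 \<le> card C"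
      using F'(2,3) lt card_insert_le[of F' M] by (simp add: card_insert_if)
    moreover have "insert M F' \<subseteq> Ms" "finite (insert M F')" using F'(1,2) M(1) Fb(3) by auto
    ultimately show ?thesis by blast
  qed
qed

lemma glue:
  assumes C: "maxchain {U\<in>P. N \<subseteq> U} C" and D: "maxchain {U\<in>P. U \<subseteq> N} D" and N: "N \<in> P"
  shows "maxchain P (C \<union> D)" "C \<inter> D = {N}" "N \<in> C" "N \<in> D"
proof -
  have Cs: "\<forall>U\<in>C. N \<subseteq> U \<and> U \<in> P" using C unfolding maxchain_def ischain_def by auto
  have Ds: "\<forall>U\<in>D. U \<subseteq> N \<and> U \<in> P" using D unfolding maxchain_def ischain_def by auto
  have chC: "\<forall>U\<in>C. \<forall>Y\<in>C. U \<subseteq> Y \<or> Y \<subseteq> U" using C unfolding maxchain_def ischain_def by blast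
  have chD: "\<forall>U\<in>D. \<forall>Y\<in>D. U \<subseteq> Y \<or> Y \<subseteq> U" using D unfolding maxchain_def ischain_def by blast
  have mC: "\<And>Y. Y \<in> P \<Longrightarrow> N \<subseteq> Y \<Longrightarrow> \<forall>U\<in>C. Y \<subseteq> U \<or> U \<subseteq> Y \<Longrightarrow> Y \<in> C"
    using C unfolding maxchain_def by blast
  have mD: "\<And>Y. Y \<in> P \<Longrightarrow> Y \<subseteq> N \<Longrightarrow> \<forall>U\<in>D. Y \<subseteq> U \<or> U \<subseteq> Y \<Longrightarrow> Y \<in> D"
    using D unfolding maxchain_def by blast
  show NC: "N \<in> C" using mC[OF N] Cs by blast
  show ND: "N \<in> D" using mD[OF N] Ds by blast
  have "\<And>U. U \<in> C \<Longrightarrow> U \<in> D \<Longrightarrow> U = N" using Cs Ds by (meson subset_antisym)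
  then show "C \<inter> D = {N}" using NC ND by blast
  show "maxchain P (C \<union> D)" unfolding maxchain_def ischain_def
  proof (intro conjI ballI impI)
    show "C \<union> D \<subseteq> P" using Cs Ds by blast
  next
    fix U Y assume UY: "U \<in> C \<union> D" "Y \<in> C \<union> D"
    show "U \<subseteq> Y \<or> Y \<subseteq> U"
    proof (cases "U \<in> C")
      case True
      show ?thesis
      proof (cases "Y \<in> C")
        case True then show ?thesis using chC \<open>U \<in> C\<close> by blast
      next
        case False then have "Y \<in> D" using UY by blast
        then have "Y \<subseteq> U" using Cs Ds \<open>U \<in> C\<close> by (meson order_trans)
        then show ?thesis by simp
      qed
    next
      case False
      then have UD: "U \<in> D" using UY by blast
      show ?thesis
      proof (cases "Y \<in> C")
        case True
        then have "U \<subseteq> Y" using Cs Ds UD by (meson order_trans)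
        then show ?thesis by simp
      next
        case False then have "Y \<in> D" using UY by blast
        then show ?thesis using chD UD by blast
      qed
    qed
  next
    fix Y assume Y: "Y \<in> P" "\<forall>U\<in>C \<union> D. Y \<subseteq> U \<or> U \<subseteq> Y"
    then have "Y \<subseteq> N \<or> N \<subseteq> Y" using NC by blast
    then show "Y \<in> C \<union> D"
    proof
      assume "Y \<subseteq> N"
      then have "Y \<in> D" using mD Y by blast
      then show ?thesis by simp
    next
      assume "N \<subseteq> Y"
      then have "Y \<in> C" using mC Y by blast
      then show ?thesis by simp
    qed
  qed
qed

definition lensC :: "'a set set \<Rightarrow> nat set" where
  "lensC P = {t. \<exists>C. maxchain P C \<and> card C = Suc t}"

definition alphaA :: "'a set \<Rightarrow> 'a set set \<Rightarrow> nat" where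
  "alphaA A Ms = (LEAST n. \<exists>F. finite F \<and> card F = n \<and> F \<subseteq> Ms \<and> A \<inter> \<Inter>F = A \<inter> \<Inter>Ms)"

lemma abstract_main:
  assumes A: "finite A" and Ms: "Ms \<subseteq> Pow A" and F0: "finite F0" "F0 \<noteq> {}" "F0 \<subseteq> Ms"
    and N: "N = \<Inter>F0"
    and hyp: "\<forall>t\<in>lensC (PP A Ms). t = alphaA A Ms"
  shows "\<exists>m. lensC (PP A {M\<in>Ms. N \<subseteq> M}) = {m} \<and> alphaA A {M\<in>Ms. N \<subseteq> M} = m"
proof -
  define P where "P = PP A Ms"
  define MsN where "MsN = {M\<in>Ms. N \<subseteq> M}"
  define a where "a = alphaA A Ms"
  have finP: "finite P" unfolding P_def using PP_finite[OF A Ms] .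
  have PA: "P \<subseteq> Pow A" unfolding P_def using PP_sub[OF Ms] .
  have MsNA: "MsN \<subseteq> Pow A" using Ms unfolding MsN_def by auto
  have NA: "N \<subseteq> A" using N F0 Ms by blast
  have F0N: "F0 \<subseteq> MsN" unfolding MsN_def using F0(3) N by auto
  have PN: "PP A MsN = {U\<in>P. N \<subseteq> U}"
  proof (intro equalityI subsetI)
    fix U assume "U \<in> PP A MsN"
    then consider "U = A" | F where "finite F" "F \<noteq> {}" "F \<subseteq> MsN" "U = \<Inter>F"
      unfolding PP_def by auto
    then show "U \<in> {U\<in>P. N \<subseteq> U}"
    proof cases
      case 1 then show ?thesis using NA unfolding P_def PP_def by auto
    next
      case 2
      then have "U \<in> P" unfolding P_def PP_def MsN_def by auto
      moreover have "N \<subseteq> U" using 2 unfolding MsN_def by auto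
      ultimately show ?thesis by simp
    qed
  next
    fix U assume U: "U \<in> {U\<in>P. N \<subseteq> U}"
    then consider "U = A" | F where "finite F" "F \<noteq> {}" "F \<subseteq> Ms" "U = \<Inter>F"
      unfolding P_def PP_def by auto
    then show "U \<in> PP A MsN"
    proof cases
      case 1 then show ?thesis unfolding PP_def by auto
    next
      case 2
      then have "F \<subseteq> MsN" using U unfolding MsN_def by auto
      then show ?thesis using 2 unfolding PP_def by blast
    qed
  qed
  have NP: "N \<in> P" unfolding P_def PP_def using F0 N by blast
  define Q where "Q = {U\<in>P. U \<subseteq> N}"
  have finQ: "finite Q" unfolding Q_def using finP by simp
  obtain D where D: "maxchain Q D" using ex_maxchain[OF finQ] by blast
  have finMs: "finite Ms" using Ms A by (meson finite_Pow_iff finite_subset)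
  define Phi where "Phi = A \<inter> \<Inter>Ms"
  have PhiP: "Phi \<in> P"
  proof -
    have "Ms \<noteq> {}" using F0 by blast
    moreover have "Phi = \<Inter>Ms" unfolding Phi_def using Ms \<open>Ms \<noteq> {}\<close> by auto
    ultimately show ?thesis unfolding P_def PP_def using finMs by blast
  qed
  have PhiN: "Phi \<subseteq> N" unfolding Phi_def N using F0 by blast
  have Phi_le: "\<forall>U\<in>P. Phi \<subseteq> U" unfolding P_def PP_def Phi_def by blast
  have finD: "finite D" using D finQ unfolding maxchain_def ischain_def by (meson finite_subset)
  have DQ: "D \<subseteq> Q" using D unfolding maxchain_def ischain_def by blast
  have chD: "\<forall>U\<in>D. \<forall>Y\<in>D. U \<subseteq> Y \<or> Y \<subseteq> U" using D unfolding maxchain_def ischain_def by blast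
  have mD: "\<And>Y. Y \<in> Q \<Longrightarrow> \<forall>U\<in>D. Y \<subseteq> U \<or> U \<subseteq> Y \<Longrightarrow> Y \<in> D"
    using D unfolding maxchain_def by blast
  have PhiD: "Phi \<in> D" using mD[of Phi] PhiP PhiN Phi_le DQ unfolding Q_def by blast
  have ND: "N \<in> D" using mD[of N] NP DQ unfolding Q_def by blast
  obtain FD where FD: "FD \<subseteq> Ms" "finite FD" "card FD + 1 \<le> card D" "N \<inter> \<Inter>FD = Phi"
  proof -
    have "\<exists>F. F \<subseteq> Ms \<and> finite F \<and> card F + 1 \<le> card D \<and> N \<inter> \<Inter>F = Phi"
    proof (rule CF[OF Ms finD])
      show "D \<subseteq> PP A Ms" using DQ unfolding Q_def P_def by auto
      show "\<forall>U\<in>D. \<forall>Y\<in>D. U \<subseteq> Y \<or> Y \<subseteq> U" by (rule chD)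
      show "Phi \<in> D" by (rule PhiD)
      show "N \<in> D" by (rule ND)
      show "\<forall>U\<in>D. Phi \<subseteq> U \<and> U \<subseteq> N" using DQ Phi_le unfolding Q_def by blast
      show "\<forall>Y\<in>PP A Ms. Phi \<subseteq> Y \<and> Y \<subseteq> N \<and> (\<forall>U\<in>D. Y \<subseteq> U \<or> U \<subseteq> Y) \<longrightarrow> Y \<in> D"
        using mD unfolding Q_def P_def by blast
    qed
    then show ?thesis using that by blast
  qed
  have key: "\<And>C. maxchain (PP A MsN) C \<Longrightarrow> card C + card D = a + 2"
  proof -
    fix C assume C: "maxchain (PP A MsN) C"
    have C': "maxchain {U\<in>P. N \<subseteq> U} C" using C PN by simp
    have g: "maxchain P (C \<union> D)" "C \<inter> D = {N}"
      using glue[OF C' _ NP] D unfolding Q_def by auto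
    have finC: "finite C" using C PP_finite[OF A MsNA] unfolding maxchain_def ischain_def
      by (meson finite_subset)
    have "card (C \<union> D) + card (C \<inter> D) = card C + card D"
      using card_Un_Int[OF finC finD] by simp
    then have cu: "card (C \<union> D) + 1 = card C + card D" using g(2) by simp
    have "card (C \<union> D) \<ge> 1" using g(2) finC finD
      by (metis One_nat_def Suc_leI card_gt_0_iff empty_iff finite_UnI Int_iff singletonI UnI1)
    then have "card (C \<union> D) - 1 \<in> lensC P" unfolding lensC_def using g(1) by force
    then have "card (C \<union> D) - 1 = a" using hyp unfolding a_def P_def by blast
    then show "card C + card D = a + 2" using cu \<open>card (C \<union> D) \<ge> 1\<close> by linarith
  qed
  obtain C0 where C0: "maxchain (PP A MsN) C0"
    using ex_maxchain[OF PP_finite[OF A MsNA]] by blast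
  define m where "m = card C0 - 1"
  have C0pos: "card C0 \<ge> 1"
  proof -
    have "C0 \<noteq> {}" using maxchain_ne[OF C0, of A] unfolding PP_def by blast
    moreover have "finite C0" using C0 PP_finite[OF A MsNA] unfolding maxchain_def ischain_def
      by (meson finite_subset)
    ultimately show ?thesis by (simp add: Suc_leI card_gt_0_iff)
  qed
  have lens: "lensC (PP A MsN) = {m}"
  proof (intro equalityI subsetI)
    fix t assume "t \<in> lensC (PP A MsN)"
    then obtain C where "maxchain (PP A MsN) C" "card C = Suc t" unfolding lensC_def by blast
    then show "t \<in> {m}" using key[OF C0] key[of C] unfolding m_def by simp
  next
    fix t assume "t \<in> {m}"
    then show "t \<in> lensC (PP A MsN)" unfolding lensC_def m_def using C0 C0pos
      by (intro CollectI exI[of _ C0]) simp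
  qed
  have PhiN_eq: "A \<inter> \<Inter>MsN = N"
  proof
    show "A \<inter> \<Inter>MsN \<subseteq> N" unfolding N using F0N by blast
    show "N \<subseteq> A \<inter> \<Inter>MsN" using NA unfolding MsN_def by blast
  qed
  define Pr where "Pr = (\<lambda>n. \<exists>F. finite F \<and> card F = n \<and> F \<subseteq> MsN \<and> A \<inter> \<Inter>F = A \<inter> \<Inter>MsN)"
  have alN: "alphaA A MsN = (LEAST n. Pr n)" unfolding alphaA_def Pr_def ..
  obtain F1 where F1: "F1 \<subseteq> MsN" "finite F1" "card F1 + 1 \<le> card C0" "A \<inter> \<Inter>F1 = N"
  proof -
    have finC0: "finite C0" using C0 PP_finite[OF A MsNA] unfolding maxchain_def ischain_def
      by (meson finite_subset)
    have C0s: "C0 \<subseteq> PP A MsN" using C0 unfolding maxchain_def ischain_def by blast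
    have NC0: "N \<in> C0" and AC0: "A \<in> C0"
    proof -
      have C0': "maxchain {U\<in>P. N \<subseteq> U} C0" using C0 PN by simp
      show "N \<in> C0" using glue(3)[OF C0' _ NP] D unfolding Q_def by blast
      have "\<forall>U\<in>C0. U \<subseteq> A" using C0s PP_sub[OF MsNA] by blast
      moreover have "A \<in> PP A MsN" unfolding PP_def by simp
      ultimately show "A \<in> C0" using C0 unfolding maxchain_def by blast
    qed
    have "\<exists>F. F \<subseteq> MsN \<and> finite F \<and> card F + 1 \<le> card C0 \<and> A \<inter> \<Inter>F = N"
    proof (rule CF[OF MsNA finC0 C0s])
      show "\<forall>U\<in>C0. \<forall>Y\<in>C0. U \<subseteq> Y \<or> Y \<subseteq> U" using C0 unfolding maxchain_def ischain_def by blast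
      show "N \<in> C0" by (rule NC0)
      show "A \<in> C0" by (rule AC0)
      show "\<forall>U\<in>C0. N \<subseteq> U \<and> U \<subseteq> A" using C0s PN PP_sub[OF MsNA] by blast
      show "\<forall>Y\<in>PP A MsN. N \<subseteq> Y \<and> Y \<subseteq> A \<and> (\<forall>U\<in>C0. Y \<subseteq> U \<or> U \<subseteq> Y) \<longrightarrow> Y \<in> C0"
        using C0 unfolding maxchain_def by blast
    qed
    then show ?thesis using that by blast
  qed
  have PrF1: "Pr (card F1)" unfolding Pr_def using F1 PhiN_eq by blast
  have le1: "(LEAST n. Pr n) \<le> m" using Least_le[of Pr, OF PrF1] F1(3) unfolding m_def by linarith
  have ge: "\<And>n. Pr n \<Longrightarrow> m \<le> n"
  proof -
    fix n assume "Pr n"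
    then obtain F where F: "finite F" "card F = n" "F \<subseteq> MsN" "A \<inter> \<Inter>F = N"
      unfolding Pr_def using PhiN_eq by auto
    have "A \<inter> \<Inter>(F \<union> FD) = Phi" using F(4) FD(4) by auto
    moreover have "F \<union> FD \<subseteq> Ms" using F(3) FD(1) unfolding MsN_def by auto
    moreover have "finite (F \<union> FD)" using F(1) FD(2) by simp
    ultimately have "a \<le> card (F \<union> FD)" unfolding a_def alphaA_def Phi_def
      by (intro Least_le) blast
    also have "\<dots> \<le> card F + card FD" by (rule card_Un_le)
    finally have "a \<le> n + card FD" using F(2) by simp
    then show "m \<le> n" using key[OF C0] FD(3) C0pos unfolding m_def by linarith
  qed
  have "(LEAST n. Pr n) \<ge> m" using LeastI_ex[of Pr] PrF1 ge by blast
  then have "alphaA A MsN = m" using alN le1 by simp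
  then show ?thesis using lens unfolding MsN_def by blast
qed

lemma lens_transfer:
  assumes inj: "inj_on phi P" and mono: "\<forall>U\<in>P. \<forall>V\<in>P. phi U \<subseteq> phi V \<longleftrightarrow> U \<subseteq> V"
  shows "lensC (phi ` P) = lensC P"
proof (intro equalityI subsetI)
  have monoD: "\<And>U V. U \<in> P \<Longrightarrow> V \<in> P \<Longrightarrow> phi U \<subseteq> phi V \<longleftrightarrow> U \<subseteq> V" using mono by blast
  fix t assume "t \<in> lensC (phi ` P)"
  then obtain C' where C': "maxchain (phi ` P) C'" "card C' = Suc t" unfolding lensC_def by blast
  define C where "C = {U\<in>P. phi U \<in> C'}"
  have C'P: "C' \<subseteq> phi ` P" using C' unfolding maxchain_def ischain_def by blast
  have img: "phi ` C = C'" unfolding C_def using C'P by blast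
  have CP: "C \<subseteq> P" unfolding C_def by blast
  have injC: "inj_on phi C" using inj CP by (rule inj_on_subset)
  have "maxchain P C" unfolding maxchain_def ischain_def
  proof (intro conjI ballI impI)
    show "C \<subseteq> P" by (rule CP)
  next
    fix U Y assume UY: "U \<in> C" "Y \<in> C"
    have chC': "\<forall>U\<in>C'. \<forall>Y\<in>C'. U \<subseteq> Y \<or> Y \<subseteq> U" using C' unfolding maxchain_def ischain_def by blast
    have "phi U \<in> C'" "phi Y \<in> C'" "U \<in> P" "Y \<in> P" using UY unfolding C_def by auto
    then show "U \<subseteq> Y \<or> Y \<subseteq> U" using chC' monoD by metis
  next
    fix Y assume Y: "Y \<in> P" "\<forall>U\<in>C. Y \<subseteq> U \<or> U \<subseteq> Y"
    have "\<forall>U'\<in>C'. phi Y \<subseteq> U' \<or> U' \<subseteq> phi Y"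
    proof
      fix U' assume "U' \<in> C'"
      then obtain U where "U \<in> C" "U' = phi U" using img by blast
      moreover have "U \<in> P" using \<open>U \<in> C\<close> CP by blast
      moreover have "Y \<subseteq> U \<or> U \<subseteq> Y" using Y(2) \<open>U \<in> C\<close> by blast
      ultimately show "phi Y \<subseteq> U' \<or> U' \<subseteq> phi Y" using Y(1) monoD by metis
    qed
    then have "phi Y \<in> C'" using C' Y(1) unfolding maxchain_def by blast
    then show "Y \<in> C" unfolding C_def using Y(1) by blast
  qed
  moreover have "card C = Suc t" using card_image[OF injC] img C'(2) by simp
  ultimately show "t \<in> lensC P" unfolding lensC_def by blast
next
  have monoD: "\<And>U V. U \<in> P \<Longrightarrow> V \<in> P \<Longrightarrow> phi U \<subseteq> phi V \<longleftrightarrow> U \<subseteq> V" using mono by blast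
  fix t assume "t \<in> lensC P"
  then obtain C where C: "maxchain P C" "card C = Suc t" unfolding lensC_def by blast
  have CP: "C \<subseteq> P" using C unfolding maxchain_def ischain_def by blast
  have injC: "inj_on phi C" using inj CP by (rule inj_on_subset)
  have "maxchain (phi ` P) (phi ` C)" unfolding maxchain_def ischain_def
  proof (intro conjI ballI impI)
    show "phi ` C \<subseteq> phi ` P" using CP by blast
  next
    fix U' Y' assume "U' \<in> phi ` C" "Y' \<in> phi ` C"
    then obtain U Y where "U \<in> C" "Y \<in> C" "U' = phi U" "Y' = phi Y" by blast
    moreover have "U \<subseteq> Y \<or> Y \<subseteq> U" using C \<open>U \<in> C\<close> \<open>Y \<in> C\<close> unfolding maxchain_def ischain_def by blast
    moreover have "U \<in> P" "Y \<in> P" using \<open>U \<in> C\<close> \<open>Y \<in> C\<close> CP by auto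
    ultimately show "U' \<subseteq> Y' \<or> Y' \<subseteq> U'" using monoD by metis
  next
    fix Y' assume Y': "Y' \<in> phi ` P" "\<forall>U'\<in>phi ` C. Y' \<subseteq> U' \<or> U' \<subseteq> Y'"
    then obtain Y where Y: "Y \<in> P" "Y' = phi Y" by blast
    have "\<forall>U\<in>C. Y \<subseteq> U \<or> U \<subseteq> Y"
    proof
      fix U assume "U \<in> C"
      then have "phi Y \<subseteq> phi U \<or> phi U \<subseteq> phi Y" using Y' Y by blast
      moreover have "U \<in> P" using \<open>U \<in> C\<close> CP by blast
      ultimately show "Y \<subseteq> U \<or> U \<subseteq> Y" using monoD Y(1) by metis
    qed
    then have "Y \<in> C" using C Y(1) unfolding maxchain_def by blast
    then show "Y' \<in> phi ` C" using Y by blast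
  qed
  moreover have "card (phi ` C) = Suc t" using card_image[OF injC] C(2) by simp
  ultimately show "t \<in> lensC (phi ` P)" unfolding lensC_def by blast
qed

locale satmap =
  fixes S :: "'a set \<Rightarrow> bool" and phi :: "'a set \<Rightarrow> 'b set" and A :: "'a set"
  assumes SA: "S A"
    and Sint: "\<And>F. \<forall>U\<in>F. S U \<Longrightarrow> S (A \<inter> \<Inter>F)"
    and Ssub: "\<And>U. S U \<Longrightarrow> U \<subseteq> A"
    and mono: "\<And>U V. S U \<Longrightarrow> S V \<Longrightarrow> phi U \<subseteq> phi V \<longleftrightarrow> U \<subseteq> V"
    and inter: "\<And>F. \<forall>U\<in>F. S U \<Longrightarrow> phi (A \<inter> \<Inter>F) = phi A \<inter> \<Inter>(phi ` F)"
begin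

lemma le_A: "S U \<Longrightarrow> phi U \<subseteq> phi A"
  using mono[OF _ SA] Ssub by blast

lemma inter_ne: "F \<noteq> {} \<Longrightarrow> \<forall>U\<in>F. S U \<Longrightarrow> phi A \<inter> \<Inter>(phi ` F) = \<Inter>(phi ` F)"
  using le_A by blast

lemma eq_iff: "S U \<Longrightarrow> S V \<Longrightarrow> phi U = phi V \<longleftrightarrow> U = V"
  using mono by blast

lemma PP_S: assumes "\<forall>M\<in>Ms. S M" "U \<in> PP A Ms" shows "S U"
proof -
  from assms(2) consider "U = A" | F where "F \<noteq> {}" "F \<subseteq> Ms" "U = \<Inter>F" unfolding PP_def by auto
  then show ?thesis
  proof cases
    case 1 then show ?thesis using SA by simp
  next
    case 2
    have "\<forall>M\<in>F. S M" using 2 assms(1) by blast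
    moreover have "A \<inter> \<Inter>F = \<Inter>F" using 2 \<open>\<forall>M\<in>F. S M\<close> Ssub by blast
    ultimately show ?thesis using Sint 2(3) by metis
  qed
qed

lemma PP_img:
  assumes Ms: "\<forall>M\<in>Ms. S M"
  shows "PP (phi A) (phi ` Ms) = phi ` PP A Ms"
proof (intro equalityI subsetI)
  fix W assume "W \<in> PP (phi A) (phi ` Ms)"
  then consider "W = phi A" | F' where "finite F'" "F' \<noteq> {}" "F' \<subseteq> phi ` Ms" "W = \<Inter>F'"
    unfolding PP_def by auto
  then show "W \<in> phi ` PP A Ms"
  proof cases
    case 1 then show ?thesis unfolding PP_def by blast
  next
    case 2
    define F where "F = {M\<in>Ms. phi M \<in> F'}"
    have F'eq: "F' = phi ` F" unfolding F_def using 2(3) by blast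
    have FS: "\<forall>U\<in>F. S U" using Ms unfolding F_def by blast
    have "finite F" 
    proof -
      have "inj_on phi F" using FS eq_iff by (meson inj_onI)
      then show ?thesis using 2(1) F'eq finite_image_iff by metis
    qed
    moreover have "F \<noteq> {}" using 2(2) F'eq by blast
    moreover have "F \<subseteq> Ms" unfolding F_def by blast
    moreover have "phi (\<Inter>F) = W"
    proof -
      have "A \<inter> \<Inter>F = \<Inter>F" using \<open>F \<noteq> {}\<close> FS Ssub by blast
      then have "phi (\<Inter>F) = phi A \<inter> \<Inter>(phi ` F)" using inter[OF FS] by simp
      also have "\<dots> = \<Inter>(phi ` F)" using inter_ne[OF \<open>F \<noteq> {}\<close> FS] .
      finally show ?thesis using 2(4) F'eq by simp
    qed
    ultimately show ?thesis unfolding PP_def by blast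
  qed
next
  fix W assume "W \<in> phi ` PP A Ms"
  then obtain U where U: "U \<in> PP A Ms" "W = phi U" by blast
  then consider "U = A" | F where "finite F" "F \<noteq> {}" "F \<subseteq> Ms" "U = \<Inter>F"
    unfolding PP_def by auto
  then show "W \<in> PP (phi A) (phi ` Ms)"
  proof cases
    case 1 then show ?thesis using U unfolding PP_def by simp
  next
    case 2
    have FS: "\<forall>U\<in>F. S U" using Ms 2 by blast
    have "A \<inter> \<Inter>F = \<Inter>F" using 2 FS Ssub by blast
    then have "W = phi A \<inter> \<Inter>(phi ` F)" using inter[OF FS] U 2 by simp
    also have "\<dots> = \<Inter>(phi ` F)" using inter_ne[OF 2(2) FS] .
    finally show ?thesis unfolding PP_def using 2 by blast
  qed
qed

lemma lens_img:
  assumes Ms: "\<forall>M\<in>Ms. S M"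
  shows "lensC (PP (phi A) (phi ` Ms)) = lensC (PP A Ms)"
proof -
  have SP: "\<forall>U\<in>PP A Ms. S U" using PP_S[OF Ms] by blast
  have "inj_on phi (PP A Ms)" using SP eq_iff by (meson inj_onI)
  moreover have "\<forall>U\<in>PP A Ms. \<forall>V\<in>PP A Ms. phi U \<subseteq> phi V \<longleftrightarrow> U \<subseteq> V" using SP mono by blast
  ultimately show ?thesis unfolding PP_img[OF Ms] by (rule lens_transfer)
qed

lemma alpha_img:
  assumes Ms: "\<forall>M\<in>Ms. S M"
  shows "alphaA (phi A) (phi ` Ms) = alphaA A Ms"
proof -
  have injMs: "inj_on phi Ms" using Ms eq_iff by (meson inj_onI)
  have SI: "S (A \<inter> \<Inter>Ms)" using Sint Ms by blast
  have "\<And>n. (\<exists>F'. finite F' \<and> card F' = n \<and> F' \<subseteq> phi ` Ms \<and> phi A \<inter> \<Inter>F' = phi A \<inter> \<Inter>(phi ` Ms))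
      \<longleftrightarrow> (\<exists>F. finite F \<and> card F = n \<and> F \<subseteq> Ms \<and> A \<inter> \<Inter>F = A \<inter> \<Inter>Ms)"
  proof
    fix n
    assume "\<exists>F'. finite F' \<and> card F' = n \<and> F' \<subseteq> phi ` Ms \<and> phi A \<inter> \<Inter>F' = phi A \<inter> \<Inter>(phi ` Ms)"
    then obtain F' where F': "finite F'" "card F' = n" "F' \<subseteq> phi ` Ms" "phi A \<inter> \<Inter>F' = phi A \<inter> \<Inter>(phi ` Ms)"
      by blast
    define F where "F = {M\<in>Ms. phi M \<in> F'}"
    have F'eq: "F' = phi ` F" unfolding F_def using F'(3) by blast
    have FMs: "F \<subseteq> Ms" unfolding F_def by blast
    have injF: "inj_on phi F" using inj_on_subset[OF injMs FMs] .
    have FS: "\<forall>U\<in>F. S U" using Ms FMs by blast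
    have finF: "finite F" using F'(1) F'eq injF finite_image_iff by metis
    have cF: "card F = n" using card_image[OF injF] F'eq F'(2) by simp
    have "phi (A \<inter> \<Inter>F) = phi (A \<inter> \<Inter>Ms)" using inter[OF FS] inter[OF Ms] F'(4) F'eq by simp
    then have "A \<inter> \<Inter>F = A \<inter> \<Inter>Ms" using eq_iff Sint[OF FS] SI by blast
    then show "\<exists>F. finite F \<and> card F = n \<and> F \<subseteq> Ms \<and> A \<inter> \<Inter>F = A \<inter> \<Inter>Ms" using finF cF FMs by blast
  next
    fix n
    assume "\<exists>F. finite F \<and> card F = n \<and> F \<subseteq> Ms \<and> A \<inter> \<Inter>F = A \<inter> \<Inter>Ms"
    then obtain F where F: "finite F" "card F = n" "F \<subseteq> Ms" "A \<inter> \<Inter>F = A \<inter> \<Inter>Ms" by blast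
    have injF: "inj_on phi F" using inj_on_subset[OF injMs F(3)] .
    have FS: "\<forall>U\<in>F. S U" using Ms F(3) by blast
    have "phi A \<inter> \<Inter>(phi ` F) = phi A \<inter> \<Inter>(phi ` Ms)" using inter[OF FS] inter[OF Ms] F(4) by simp
    moreover have "card (phi ` F) = n" using card_image[OF injF] F(2) by simp
    ultimately show "\<exists>F'. finite F' \<and> card F' = n \<and> F' \<subseteq> phi ` Ms \<and> phi A \<inter> \<Inter>F' = phi A \<inter> \<Inter>(phi ` Ms)"
      using F(1,3) by blast
  qed
  then show ?thesis unfolding alphaA_def by simp
qed

end

context normal
begin

definition phiN :: "'a set \<Rightarrow> 'a set set" where
  "phiN U = (\<lambda>h. H #> h) ` U"

definition satN :: "'a set \<Rightarrow> bool" where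
  "satN U \<longleftrightarrow> U \<subseteq> carrier G \<and> (\<forall>h\<in>U. H #> h \<subseteq> U)"

lemma phiN_mem:
  assumes "satN U" "g \<in> carrier G"
  shows "H #> g \<in> phiN U \<longleftrightarrow> g \<in> U"
proof
  assume "H #> g \<in> phiN U"
  then obtain h where h: "h \<in> U" "H #> g = H #> h" unfolding phiN_def by blast
  have "g \<in> H #> g" by (rule rcos_self[OF assms(2) subgroup_axioms])
  then have "g \<in> H #> h" using h(2) by simp
  then show "g \<in> U" using h(1) assms(1) unfolding satN_def by blast
next
  assume "g \<in> U" then show "H #> g \<in> phiN U" unfolding phiN_def by blast
qed

lemma satN_satmap: "satmap satN phiN (carrier G)"
proof
  show "satN (carrier G)" unfolding satN_def using r_coset_subset_G subset by blast
next
  fix F assume F: "\<forall>U\<in>F. satN U"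
  show "satN (carrier G \<inter> \<Inter>F)" using F r_coset_subset_G subset unfolding satN_def by blast
next
  fix U assume "satN U" then show "U \<subseteq> carrier G" unfolding satN_def by blast
next
  fix U V assume UV: "satN U" "satN V"
  show "phiN U \<subseteq> phiN V \<longleftrightarrow> U \<subseteq> V"
  proof
    assume le: "phiN U \<subseteq> phiN V"
    show "U \<subseteq> V"
    proof
      fix u assume "u \<in> U"
      then have "H #> u \<in> phiN U" "u \<in> carrier G" using UV(1) unfolding phiN_def satN_def by auto
      then show "u \<in> V" using le phiN_mem[OF UV(2)] by blast
    qed
  next
    assume "U \<subseteq> V" then show "phiN U \<subseteq> phiN V" unfolding phiN_def by blast
  qed
next
  fix F assume F: "\<forall>U\<in>F. satN U"
  show "phiN (carrier G \<inter> \<Inter>F) = phiN (carrier G) \<inter> \<Inter>(phiN ` F)"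
  proof (intro equalityI subsetI)
    fix W assume "W \<in> phiN (carrier G \<inter> \<Inter>F)"
    then obtain g where g: "g \<in> carrier G" "g \<in> \<Inter>F" "W = H #> g" unfolding phiN_def by blast
    then show "W \<in> phiN (carrier G) \<inter> \<Inter>(phiN ` F)" unfolding phiN_def by blast
  next
    fix W assume W: "W \<in> phiN (carrier G) \<inter> \<Inter>(phiN ` F)"
    then obtain g where g: "g \<in> carrier G" "W = H #> g" unfolding phiN_def by blast
    have "\<forall>U\<in>F. g \<in> U"
    proof
      fix U assume "U \<in> F"
      then have "W \<in> phiN U" using W by blast
      then show "g \<in> U" using phiN_mem[of U g] F \<open>U \<in> F\<close> g by blast
    qed
    then show "W \<in> phiN (carrier G \<inter> \<Inter>F)" using g unfolding phiN_def by blast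
  qed
qed

lemma subgroup_sat:
  assumes "subgroup K G" "H \<subseteq> K"
  shows "satN K"
  unfolding satN_def
proof (intro conjI ballI)
  show "K \<subseteq> carrier G" using subgroup.subset[OF assms(1)] .
next
  fix h assume hK: "h \<in> K"
  show "H #> h \<subseteq> K"
  proof
    fix x assume "x \<in> H #> h"
    then obtain n where n: "n \<in> H" "x = n \<otimes> h" unfolding r_coset_def by blast
    have "n \<in> K" using assms(2) n(1) by blast
    from subgroup.m_closed[OF assms(1) this hK] show "x \<in> K" using n(2) by simp
  qed
qed

lemma carrier_Mod: "carrier (G Mod H) = phiN (carrier G)"
  unfolding phiN_def carrier_FactGroup by (rule refl)

lemma subgroup_to_Mod:
  assumes K: "subgroup K G" "H \<subseteq> K"
  shows "subgroup (phiN K) (G Mod H)"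
proof -
  interpret Q: group "G Mod H" by (rule factorgroup_is_group)
  have KG: "K \<subseteq> carrier G" using subgroup.subset[OF K(1)] .
  show ?thesis
  proof (rule Q.subgroupI)
    show "phiN K \<subseteq> carrier (G Mod H)" unfolding carrier_Mod phiN_def using KG by (rule image_mono)
  next
    have "\<one> \<in> K" using subgroup.one_closed[OF K(1)] .
    then have "H #> \<one> \<in> phiN K" unfolding phiN_def by (rule imageI)
    then show "phiN K \<noteq> {}" by blast
  next
    fix W assume "W \<in> phiN K"
    then obtain k where k: "k \<in> K" "W = H #> k" unfolding phiN_def by blast
    have kG: "k \<in> carrier G" using k(1) KG by blast
    have Wc: "W \<in> carrier (G Mod H)" unfolding carrier_Mod phiN_def using kG k(2) by blast
    have "inv\<^bsub>G Mod H\<^esub> W = set_inv W" by (rule inv_FactGroup[OF Wc])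
    also have "\<dots> = H #> inv k" using rcos_inv[OF kG] k(2) by simp
    finally have e: "inv\<^bsub>G Mod H\<^esub> W = H #> inv k" .
    have "inv k \<in> K" using subgroup.m_inv_closed[OF K(1) k(1)] .
    then have "H #> inv k \<in> phiN K" unfolding phiN_def by (rule imageI)
    then show "inv\<^bsub>G Mod H\<^esub> W \<in> phiN K" using e by simp
  next
    fix W V assume "W \<in> phiN K" "V \<in> phiN K"
    then obtain k l where kl: "k \<in> K" "W = H #> k" "l \<in> K" "V = H #> l" unfolding phiN_def by blast
    have kG: "k \<in> carrier G" "l \<in> carrier G" using kl(1,3) KG by auto
    have "W \<otimes>\<^bsub>G Mod H\<^esub> V = W <#> V" by simp
    also have "\<dots> = H #> (k \<otimes> l)" using rcos_sum[OF kG] kl(2,4) by simp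
    finally have e: "W \<otimes>\<^bsub>G Mod H\<^esub> V = H #> (k \<otimes> l)" .
    have "k \<otimes> l \<in> K" using subgroup.m_closed[OF K(1) kl(1) kl(3)] .
    then have "H #> (k \<otimes> l) \<in> phiN K" unfolding phiN_def by (rule imageI)
    then show "W \<otimes>\<^bsub>G Mod H\<^esub> V \<in> phiN K" using e by simp
  qed
qed

lemma subgroup_from_Mod:
  assumes W: "subgroup W (G Mod H)"
  shows "\<exists>K. subgroup K G \<and> H \<subseteq> K \<and> W = phiN K"
proof -
  interpret Q: group "G Mod H" by (rule factorgroup_is_group)
  define K where "K = \<Union>W"
  have Wc: "W \<subseteq> phiN (carrier G)" using subgroup.subset[OF W] unfolding carrier_Mod .
  have HW: "H \<in> W" using subgroup.one_closed[OF W] by simp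
  have Wrep: "\<And>Y. Y \<in> W \<Longrightarrow> \<exists>a\<in>carrier G. Y = H #> a" using Wc unfolding phiN_def by blast
  have KG: "K \<subseteq> carrier G"
  proof
    fix x assume "x \<in> K"
    then obtain Y where Y: "Y \<in> W" "x \<in> Y" unfolding K_def by blast
    then obtain a where a: "a \<in> carrier G" "Y = H #> a" using Wrep by blast
    have "H #> a \<subseteq> carrier G" using r_coset_subset_G[OF subset a(1)] .
    then show "x \<in> carrier G" using Y(2) a(2) by blast
  qed
  have HK: "H \<subseteq> K" unfolding K_def using HW by blast
  have cos: "\<And>h. h \<in> K \<Longrightarrow> H #> h \<in> W"
  proof -
    fix h assume "h \<in> K"
    then obtain Y where Y: "Y \<in> W" "h \<in> Y" unfolding K_def by blast
    then obtain a where a: "a \<in> carrier G" "Y = H #> a" using Wrep by blast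
    have "h \<in> H #> a" using Y(2) a(2) by simp
    then have "H #> a = H #> h" using repr_independence[OF _ a(1) subgroup_axioms] by blast
    then show "H #> h \<in> W" using Y(1) a(2) by simp
  qed
  have selfK: "\<And>g. g \<in> carrier G \<Longrightarrow> H #> g \<in> W \<Longrightarrow> g \<in> K"
  proof -
    fix g assume g: "g \<in> carrier G" "H #> g \<in> W"
    have "g \<in> H #> g" using rcos_self[OF g(1) subgroup_axioms] .
    then show "g \<in> K" unfolding K_def using g(2) by blast
  qed
  have "subgroup K G"
  proof (rule subgroupI)
    show "K \<subseteq> carrier G" by (rule KG)
    have "\<one> \<in> H" by (rule subgroup.one_closed[OF subgroup_axioms])
    then show "K \<noteq> {}" using HK by blast
  next
    fix a assume a: "a \<in> K"
    have aG: "a \<in> carrier G" using a KG by blast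
    have c: "H #> a \<in> carrier (G Mod H)" unfolding carrier_Mod phiN_def using aG by (rule imageI)
    have "inv\<^bsub>G Mod H\<^esub> (H #> a) \<in> W" using subgroup.m_inv_closed[OF W cos[OF a]] .
    moreover have "inv\<^bsub>G Mod H\<^esub> (H #> a) = H #> inv a"
      using inv_FactGroup[OF c] rcos_inv[OF aG] by simp
    ultimately have "H #> inv a \<in> W" by simp
    then show "inv a \<in> K" using selfK[of "inv a"] aG by simp
  next
    fix a b assume ab: "a \<in> K" "b \<in> K"
    have aG: "a \<in> carrier G" "b \<in> carrier G" using ab KG by auto
    have "(H #> a) \<otimes>\<^bsub>G Mod H\<^esub> (H #> b) \<in> W" using subgroup.m_closed[OF W cos[OF ab(1)] cos[OF ab(2)]] .
    moreover have "(H #> a) \<otimes>\<^bsub>G Mod H\<^esub> (H #> b) = H #> (a \<otimes> b)" using rcos_sum[OF aG] by simp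
    ultimately have "H #> (a \<otimes> b) \<in> W" by simp
    then show "a \<otimes> b \<in> K" using selfK[of "a \<otimes> b"] aG by simp
  qed
  moreover have "W = phiN K"
  proof (intro equalityI subsetI)
    fix Y assume "Y \<in> W"
    then obtain a where a: "a \<in> carrier G" "Y = H #> a" using Wrep by blast
    then have "a \<in> K" using selfK \<open>Y \<in> W\<close> by blast
    then show "Y \<in> phiN K" unfolding phiN_def using a(2) by blast
  next
    fix Y assume "Y \<in> phiN K"
    then obtain h where "h \<in> K" "Y = H #> h" unfolding phiN_def by blast
    then show "Y \<in> W" using cos by simp
  qed
  ultimately show ?thesis using HK by blast
qed

lemma phiN_eq_iff: "satN U \<Longrightarrow> satN V \<Longrightarrow> phiN U = phiN V \<longleftrightarrow> U = V"
  using satmap.eq_iff[OF satN_satmap] .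

lemma phiN_le_iff: "satN U \<Longrightarrow> satN V \<Longrightarrow> phiN U \<subseteq> phiN V \<longleftrightarrow> U \<subseteq> V"
  using satmap.mono[OF satN_satmap] .

lemma max_Mod:
  "{W. maximal_subgroup (G Mod H) W} = phiN ` {M. maximal_subgroup G M \<and> H \<subseteq> M}"
proof (intro equalityI subsetI)
  fix W assume "W \<in> {W. maximal_subgroup (G Mod H) W}"
  then have W: "subgroup W (G Mod H)" "W \<noteq> carrier (G Mod H)"
    "\<And>K. subgroup K (G Mod H) \<Longrightarrow> W \<subseteq> K \<Longrightarrow> K = W \<or> K = carrier (G Mod H)"
    unfolding maximal_subgroup_def by auto
  obtain M where M: "subgroup M G" "H \<subseteq> M" "W = phiN M" using subgroup_from_Mod[OF W(1)] by blast
  have sM: "satN M" using subgroup_sat[OF M(1,2)] .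
  have sA: "satN (carrier G)" using satmap.SA[OF satN_satmap] .
  have "M \<noteq> carrier G" using W(2) M(3) carrier_Mod by auto
  moreover have "\<forall>K. subgroup K G \<and> M \<subseteq> K \<longrightarrow> K = M \<or> K = carrier G"
  proof (intro allI impI)
    fix K assume K: "subgroup K G \<and> M \<subseteq> K"
    have HK: "H \<subseteq> K" using K M(2) by blast
    have sK: "satN K" using subgroup_sat K HK by blast
    have "phiN M \<subseteq> phiN K" using K unfolding phiN_def by blast
    then have "phiN K = phiN M \<or> phiN K = carrier (G Mod H)"
      using W(3)[OF subgroup_to_Mod[OF _ HK]] K M(3) by blast
    then show "K = M \<or> K = carrier G"
      using phiN_eq_iff[OF sK sM] phiN_eq_iff[OF sK sA] carrier_Mod by auto
  qed
  ultimately have "maximal_subgroup G M" unfolding maximal_subgroup_def using M(1) by blast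
  then show "W \<in> phiN ` {M. maximal_subgroup G M \<and> H \<subseteq> M}" using M(2,3) by blast
next
  fix W assume "W \<in> phiN ` {M. maximal_subgroup G M \<and> H \<subseteq> M}"
  then obtain M where M: "maximal_subgroup G M" "H \<subseteq> M" "W = phiN M" by blast
  have M': "subgroup M G" "M \<noteq> carrier G" "\<And>K. subgroup K G \<Longrightarrow> M \<subseteq> K \<Longrightarrow> K = M \<or> K = carrier G"
    using M(1) unfolding maximal_subgroup_def by auto
  have sM: "satN M" using subgroup_sat[OF M'(1) M(2)] .
  have sA: "satN (carrier G)" using satmap.SA[OF satN_satmap] .
  have "subgroup W (G Mod H)" using subgroup_to_Mod[OF M'(1) M(2)] M(3) by simp
  moreover have "W \<noteq> carrier (G Mod H)"
    using M(3) carrier_Mod phiN_eq_iff[OF sM sA] M'(2) by simp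
  moreover have "\<forall>K. subgroup K (G Mod H) \<and> W \<subseteq> K \<longrightarrow> K = W \<or> K = carrier (G Mod H)"
  proof (intro allI impI)
    fix K assume K: "subgroup K (G Mod H) \<and> W \<subseteq> K"
    obtain L where L: "subgroup L G" "H \<subseteq> L" "K = phiN L" using subgroup_from_Mod K by blast
    have sL: "satN L" using subgroup_sat[OF L(1,2)] .
    have "M \<subseteq> L" using K L(3) M(3) phiN_le_iff[OF sM sL] by simp
    then have "L = M \<or> L = carrier G" using M'(3)[OF L(1)] by simp
    then show "K = W \<or> K = carrier (G Mod H)" using L(3) M(3) carrier_Mod by auto
  qed
  ultimately show "W \<in> {W. maximal_subgroup (G Mod H) W}" unfolding maximal_subgroup_def by blast
qed

end

lemma MIposet_PP: "MIposet G = PP (carrier G) {M. maximal_subgroup G M}"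
  unfolding MIposet_def PP_def max_intersection_def by blast

lemma maxs_Pow: "{M. maximal_subgroup G M} \<subseteq> Pow (carrier G)"
  unfolding maximal_subgroup_def using subgroup.subset by blast

lemma alpha_A: "alpha G = alphaA (carrier G) {M. maximal_subgroup G M}"
proof -
  have "\<And>n. (\<exists>F. finite F \<and> card F = n \<and> (\<forall>M\<in>F. maximal_subgroup G M) \<and> carrier G \<inter> \<Inter>F = frattini G)
     \<longleftrightarrow> (\<exists>F. finite F \<and> card F = n \<and> F \<subseteq> {M. maximal_subgroup G M} \<and>
           carrier G \<inter> \<Inter>F = carrier G \<inter> \<Inter>{M. maximal_subgroup G M})"
    unfolding frattini_def by blast
  then show ?thesis unfolding alpha_def alphaA_def by simp
qed

lemma lens_G:
  assumes "finite (carrier G)"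
  shows "{t. \<exists>K. unrefinable_chain G K t} = lensC (MIposet G)"
proof -
  have "finite (MIposet G)" unfolding MIposet_PP using PP_finite[OF assms maxs_Pow] .
  then show ?thesis unfolding uc_eq lensC_def by (rule lens_eq)
qed

lemma lens_props:
  assumes "finite (carrier G)"
  shows "lensC (MIposet G) \<noteq> {}" "finite (lensC (MIposet G))"
proof -
  define P where "P = MIposet G"
  have finP: "finite P" unfolding P_def MIposet_PP using PP_finite[OF assms maxs_Pow] .
  obtain C where C: "maxchain P C" using ex_maxchain[OF finP] by blast
  have AP: "carrier G \<in> P" unfolding P_def MIposet_def by simp
  have "C \<noteq> {}" using maxchain_ne[OF C AP] .
  moreover have "finite C" using C finP unfolding maxchain_def ischain_def by (meson finite_subset)
  ultimately have "card C \<ge> 1" by (simp add: Suc_leI card_gt_0_iff)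
  then have "card C - 1 \<in> lensC P" unfolding lensC_def using C
    by (intro CollectI exI[of _ C]) simp
  then show "lensC (MIposet G) \<noteq> {}" unfolding P_def by blast
  have "lensC P \<subseteq> {..card P}"
  proof
    fix t assume "t \<in> lensC P"
    then obtain C' where "maxchain P C'" "card C' = Suc t" unfolding lensC_def by blast
    then have "C' \<subseteq> P" unfolding maxchain_def ischain_def by blast
    then have "card C' \<le> card P" using finP by (simp add: card_mono)
    then show "t \<in> {..card P}" using \<open>card C' = Suc t\<close> by simp
  qed
  then show "finite (lensC (MIposet G))" unfolding P_def using finite_subset by blast
qed

lemma MinMax_G:
  assumes "finite (carrier G)"
  shows "MinInt G = (LEAST t. t \<in> lensC (MIposet G))" "MaxInt G = Max (lensC (MIposet G))"
  unfolding MinInt_def MaxInt_def using lens_G[OF assms] by (simp_all add: set_eq_iff)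

theorem mainTheorem6:
  fixes G :: "('a, 'b) monoid_scheme" and N :: "'a set"
  assumes "group G" and "finite (carrier G)" and "weakly_minmax G"
    and "N \<lhd> G" and "max_intersection G N"
  shows "weakly_minmax (G Mod N)"
proof -
  interpret Nn: normal N G using assms(4) .
  define A where "A = carrier G"
  define Ms where "Ms = {M. maximal_subgroup G M}"
  define MsN where "MsN = {M\<in>Ms. N \<subseteq> M}"
  have finA: "finite A" using assms(2) unfolding A_def .
  have MsA: "Ms \<subseteq> Pow A" unfolding Ms_def A_def by (rule maxs_Pow)
  define L where "L = lensC (MIposet G)"
  have Lne: "L \<noteq> {}" and Lfin: "finite L" unfolding L_def using lens_props[OF assms(2)] by auto
  have hyp: "\<forall>t\<in>lensC (PP A Ms). t = alphaA A Ms"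
  proof
    fix t assume "t \<in> lensC (PP A Ms)"
    then have tL: "t \<in> L" unfolding L_def MIposet_PP A_def Ms_def .
    have "MinInt G \<le> t" unfolding MinMax_G[OF assms(2)] L_def[symmetric] using tL by (rule Least_le)
    moreover have "t \<le> MaxInt G" unfolding MinMax_G[OF assms(2)] L_def[symmetric] using Lfin tL by simp
    ultimately show "t = alphaA A Ms" using assms(3) unfolding weakly_minmax_def alpha_A A_def Ms_def
      by simp
  qed
  obtain F0 where F0: "finite F0" "F0 \<noteq> {}" "\<forall>M\<in>F0. maximal_subgroup G M" "N = \<Inter>F0"
    using assms(5) unfolding max_intersection_def by blast
  have F0Ms: "F0 \<subseteq> Ms" using F0(3) unfolding Ms_def by blast
  obtain m where m: "lensC (PP A MsN) = {m}" "alphaA A MsN = m"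
    using abstract_main[OF finA MsA F0(1,2) F0Ms F0(4) hyp] unfolding MsN_def by blast
  have satMsN: "\<forall>M\<in>MsN. Nn.satN M"
    unfolding MsN_def Ms_def maximal_subgroup_def using Nn.subgroup_sat by blast
  have carQ: "carrier (G Mod N) = Nn.phiN A" unfolding A_def by (rule Nn.carrier_Mod)
  have maxQ: "{W. maximal_subgroup (G Mod N) W} = Nn.phiN ` MsN"
    unfolding MsN_def Ms_def using Nn.max_Mod by simp
  have MIQ: "MIposet (G Mod N) = PP (Nn.phiN A) (Nn.phiN ` MsN)"
    unfolding MIposet_PP carQ maxQ ..
  have finQ: "finite (carrier (G Mod N))" unfolding carQ Nn.phiN_def using finA by simp
  have lensQ: "lensC (MIposet (G Mod N)) = {m}"
    unfolding MIQ A_def using satmap.lens_img[OF Nn.satN_satmap satMsN] m(1) unfolding A_def by simp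
  have alQ: "alpha (G Mod N) = m"
    unfolding alpha_A carQ maxQ A_def using satmap.alpha_img[OF Nn.satN_satmap satMsN] m(2) unfolding A_def by simp
  have "(LEAST t. t \<in> {m}) = m" by (rule Least_equality) auto
  then show ?thesis unfolding weakly_minmax_def MinMax_G[OF finQ] lensQ alQ by simp
qed

end
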